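(* Let $(G,E)$ be an undirected weighted graph with nodes $n_1,\dots,n_N$, symmetric nonnegative weights $w_{ij}$, strengths $k_i=\sum_s w_{is}$, $2m=\sum_i k_i>0$, let $\gamma\in\mathbb R$ and $\hat n\ge1$. Let $X=\{f\mid f:G\to\mathbb R^{\hat n}\}$, identified with $\mathbb R^{N\times\hat n}$ and given the Euclidean ($\ell_2$) metric. Then, as $\epsilon\to0^+$, the functionals $H_\epsilon$ $\Gamma$-converge to $H$ on $X$, where $$H_\epsilon(f)=\sum_{l=1}^{\hat n}\langle f^{(l)},\mathbf Lf^{(l)}\rangle+\frac{1}{\epsilon^2}\sum_{i=1}^N W_{\mathrm{multi}}(f(n_i))-\gamma\|f-\mathrm{mean}(f)\|_{\ell_2}^2,$$ $$H(f)=\begin{cases}|f|_{TV}-\gamma\|f-\mathrm{mean}(f)\|_{\ell_2}^2,& f\in X^p,\\ +\infty,&\text{otherwise.}\end{cases}$$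
   Context: $\mathbf L=\mathbf D-\mathbf W$ is the graph Laplacian, where $\mathbf W=[w_{ij}]$ and $\mathbf D=\mathrm{diag}(k_1,\dots,k_N)$; for $z:G\to\mathbb R$, $\langle z,\mathbf Lz\rangle=\frac12\sum_{i,j}w_{ij}(z_i-z_j)^2$. For $f\in X$, $f=(f^{(1)},\dots,f^{(\hat n)})$ with $f^{(l)}:G\to\mathbb R$. $V^{\hat n}=\{\vec e_1,\dots,\vec e_{\hat n}\}$ is the standard basis of $\mathbb R^{\hat n}$ and $X^p=\{f\mid f:G\to V^{\hat n}\}$. The multi-well potential is $W_{\mathrm{multi}}(x)=\prod_{l=1}^{\hat n}\|x-\vec e_l\|_{\ell_1}^2$ for $x\in\mathbb R^{\hat n}$. For $h:G\to\mathbb R$: $|h|_{TV}=\frac12\sum_{i,j}w_{ij}|h_i-h_j|$, $\|h\|_{\ell_2}^2=\sum_i k_ih_i^2$, $\mathrm{mean}(h)=\frac1{2m}\sum_ik_ih_i$; for vector-valued $f$ these are summed over components ($|f|_{TV}=\sum_l|f^{(l)}|_{TV}$, $\|f\|^2_{\ell_2}=\sum_l\|f^{(l)}\|^2_{\ell_2}$) and $\mathrm{mean}(f)$ is taken componentwise. $\Gamma$-convergence: functionals $F_\epsilon:X\to\mathbb R\cup\{\pm\infty\}$ $\Gamma$-converge to $F$ as $\epsilon\to0^+$ if for every sequence $\epsilon_n\to0^+$ and every $f\in X$: (i) for every sequence $f_n\to f$, $F(f)\le\liminf_n F_{\epsilon_n}(f_n)$; (ii) there exists a sequence $f_n\to f$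 with $F(f)\ge\limsup_nF_{\epsilon_n}(f_n)$. *)

theory Defs
  imports "HOL-Analysis.Analysis"
begin

text \<open>Nodes are the elements of a finite type 'v (N = CARD('v)); components are
indexed by a finite type 'l (n-hat = CARD('l) \<ge> 1). A function f : G \<rightarrow> R^n-hat
is an element of real^'l^'v, whose norm is the Euclidean (Frobenius) norm.\<close>

definition strength :: "('v::finite \<Rightarrow> 'v \<Rightarrow> real) \<Rightarrow> 'v \<Rightarrow> real" where
  "strength w i = (\<Sum>s\<in>UNIV. w i s)"

definition total_strength :: "('v::finite \<Rightarrow> 'v \<Rightarrow> real) \<Rightarrow> real" where
  "total_strength w = (\<Sum>i\<in>UNIV. strength w i)"

text \<open>Quadratic form of the graph Laplacian L = D - W: <z, L z>.\<close>
definition laplacian_form :: "('v::finite \<Rightarrow> 'v \<Rightarrow> real) \<Rightarrow> ('v \<Rightarrow> real) \<Rightarrow> real" where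
  "laplacian_form w z = (\<Sum>i\<in>UNIV. z i * (strength w i * z i - (\<Sum>j\<in>UNIV. w i j * z j)))"

definition comp :: "real^'l^'v \<Rightarrow> 'l \<Rightarrow> 'v \<Rightarrow> real" where
  "comp f l = (\<lambda>i. f $ i $ l)"

definition std_basis :: "'l::finite \<Rightarrow> real^'l" where
  "std_basis l = axis l 1"

definition l1_norm :: "real^'l::finite \<Rightarrow> real" where
  "l1_norm x = (\<Sum>j\<in>UNIV. \<bar>x $ j\<bar>)"

definition W_multi :: "real^'l::finite \<Rightarrow> real" where
  "W_multi x = (\<Prod>l\<in>UNIV. (l1_norm (x - std_basis l))\<^sup>2)"

definition graph_mean :: "('v::finite \<Rightarrow> 'v \<Rightarrow> real) \<Rightarrow> ('v \<Rightarrow> real) \<Rightarrow> real" where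
  "graph_mean w h = (1 / total_strength w) * (\<Sum>i\<in>UNIV. strength w i * h i)"

definition l2_sq :: "('v::finite \<Rightarrow> 'v \<Rightarrow> real) \<Rightarrow> ('v \<Rightarrow> real) \<Rightarrow> real" where
  "l2_sq w h = (\<Sum>i\<in>UNIV. strength w i * (h i)\<^sup>2)"

definition var_term :: "('v::finite \<Rightarrow> 'v \<Rightarrow> real) \<Rightarrow> real^'l::finite^'v \<Rightarrow> real" where
  "var_term w f = (\<Sum>l\<in>UNIV. l2_sq w (\<lambda>i. comp f l i - graph_mean w (comp f l)))"

definition tv :: "('v::finite \<Rightarrow> 'v \<Rightarrow> real) \<Rightarrow> ('v \<Rightarrow> real) \<Rightarrow> real" where
  "tv w h = (1/2) * (\<Sum>i\<in>UNIV. \<Sum>j\<in>UNIV. w i j * \<bar>h i - h j\<bar>)"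

definition tv_vec :: "('v::finite \<Rightarrow> 'v \<Rightarrow> real) \<Rightarrow> real^'l::finite^'v \<Rightarrow> real" where
  "tv_vec w f = (\<Sum>l\<in>UNIV. tv w (comp f l))"

definition Xp :: "(real^'l::finite^'v::finite) set" where
  "Xp = {f. \<forall>i. f $ i \<in> range std_basis}"

definition H_eps :: "('v::finite \<Rightarrow> 'v \<Rightarrow> real) \<Rightarrow> real \<Rightarrow> real \<Rightarrow> real^'l::finite^'v \<Rightarrow> real" where
  "H_eps w \<gamma> \<epsilon> f =
     (\<Sum>l\<in>UNIV. laplacian_form w (comp f l))
     + (1 / \<epsilon>\<^sup>2) * (\<Sum>i\<in>UNIV. W_multi (f $ i))
     - \<gamma> * var_term w f"

definition H_lim :: "('v::finite \<Rightarrow> 'v \<Rightarrow> real) \<Rightarrow> real \<Rightarrow> real^'l::finite^'v \<Rightarrow> ereal" where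
  "H_lim w \<gamma> f = (if f \<in> Xp then ereal (tv_vec w f - \<gamma> * var_term w f) else \<infinity>)"

definition gamma_converges ::
  "(real \<Rightarrow> 'a::metric_space \<Rightarrow> ereal) \<Rightarrow> ('a \<Rightarrow> ereal) \<Rightarrow> bool" where
  "gamma_converges F G \<longleftrightarrow>
     (\<forall>eps :: nat \<Rightarrow> real. (\<forall>n. eps n > 0) \<and> eps \<longlonglongrightarrow> 0 \<longrightarrow>
       (\<forall>f. (\<forall>fs. fs \<longlonglongrightarrow> f \<longrightarrow> G f \<le> liminf (\<lambda>n. F (eps n) (fs n))) \<and>
            (\<exists>fs. fs \<longlonglongrightarrow> f \<and> G f \<ge> limsup (\<lambda>n. F (eps n) (fs n)))))"

end

theory Submission
  imports Defs
begin

lemma W_multi_nonneg: "W_multi x \<ge> 0"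
  unfolding W_multi_def by (intro prod_nonneg) auto

lemma l1_norm_zero: "l1_norm x = 0 \<longleftrightarrow> x = 0"
proof
  assume "l1_norm x = 0"
  hence "\<forall>j\<in>UNIV. \<bar>x $ j\<bar> = 0" unfolding l1_norm_def
    by (subst sum_nonneg_eq_0_iff[symmetric]) auto
  thus "x = 0" by (simp add: vec_eq_iff)
qed (simp add: l1_norm_def)

lemma W_multi_zero: "W_multi x = 0 \<longleftrightarrow> x \<in> range std_basis"
  unfolding W_multi_def by (auto simp: l1_norm_zero)

lemma Xp_iff: "f \<in> Xp \<longleftrightarrow> (\<Sum>i\<in>UNIV. W_multi (f $ i)) = 0"
proof -
  have "(\<Sum>i\<in>UNIV. W_multi (f $ i)) = 0 \<longleftrightarrow> (\<forall>i\<in>UNIV. W_multi (f $ i) = 0)"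
    by (rule sum_nonneg_eq_0_iff) (auto simp: W_multi_nonneg)
  thus ?thesis unfolding Xp_def using W_multi_zero by auto
qed

lemma lap_tv:
  fixes w :: "'v::finite \<Rightarrow> 'v \<Rightarrow> real"
  assumes sym: "\<And>i j. w i j = w j i" and z: "\<And>i. z i = 0 \<or> z i = 1"
  shows "laplacian_form w z = tv w z"
proof -
  have L: "laplacian_form w z = (\<Sum>i\<in>UNIV. \<Sum>j\<in>UNIV. w i j * (z i * (z i - z j)))"
    unfolding laplacian_form_def strength_def
    by (simp add: sum_distrib_left sum_distrib_right sum_subtractf[symmetric] algebra_simps)
  have abs: "\<bar>z i - z j\<bar> = z i * (z i - z j) + z j * (z j - z i)" for i j
    using z[of i] z[of j] by auto
  have sw: "(\<Sum>i\<in>UNIV. \<Sum>j\<in>UNIV. w i j * (z j * (z j - z i)))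
        = (\<Sum>i\<in>UNIV. \<Sum>j\<in>UNIV. w i j * (z i * (z i - z j)))"
    by (subst sum.swap) (simp add: sym)
  have "tv w z = (1/2) * ((\<Sum>i\<in>UNIV. \<Sum>j\<in>UNIV. w i j * (z i * (z i - z j)))
        + (\<Sum>i\<in>UNIV. \<Sum>j\<in>UNIV. w i j * (z j * (z j - z i))))"
    unfolding tv_def abs by (simp add: distrib_left sum.distrib)
  thus ?thesis using L sw by simp
qed

lemma comp_Xp: "f \<in> Xp \<Longrightarrow> comp f l i = 0 \<or> comp f l i = 1"
  proof -
  assume "f \<in> Xp"
  then obtain k where "f $ i = axis k 1" unfolding Xp_def std_basis_def by auto
  thus ?thesis unfolding comp_def by (auto simp: axis_def)
qed

lemma tendsto_A:
  fixes fs :: "nat \<Rightarrow> real^'l::finite^'v::finite"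
  assumes "fs \<longlonglongrightarrow> f"
  shows "(\<lambda>n. (\<Sum>l\<in>UNIV. laplacian_form w (comp (fs n) l)) - \<gamma> * var_term w (fs n))
     \<longlonglongrightarrow> (\<Sum>l\<in>UNIV. laplacian_form w (comp f l)) - \<gamma> * var_term w f"
proof -
  have c: "\<And>i l. (\<lambda>n. fs n $ i $ l) \<longlonglongrightarrow> f $ i $ l"
    by (intro tendsto_vec_nth assms)
  show ?thesis
    unfolding laplacian_form_def var_term_def l2_sq_def graph_mean_def comp_def
    by (intro tendsto_intros c)
qed

lemma tendsto_P:
  fixes fs :: "nat \<Rightarrow> real^'l::finite^'v::finite"
  assumes "fs \<longlonglongrightarrow> f"
  shows "(\<lambda>n. \<Sum>i\<in>UNIV. W_multi (fs n $ i)) \<longlonglongrightarrow> (\<Sum>i\<in>UNIV. W_multi (f $ i))"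
proof -
  have c: "\<And>i l. (\<lambda>n. fs n $ i $ l) \<longlonglongrightarrow> f $ i $ l"
    by (intro tendsto_vec_nth assms)
  show ?thesis
    unfolding W_multi_def l1_norm_def
    by (simp only: vector_minus_component) (intro tendsto_intros c)
qed

theorem mainTheorem2:
  fixes w :: "'v::finite \<Rightarrow> 'v \<Rightarrow> real" and \<gamma> :: real
  assumes "\<And>i j. w i j = w j i"
    and "\<And>i j. w i j \<ge> 0"
    and "total_strength w > 0"
  shows "gamma_converges
           (\<lambda>\<epsilon> (f :: real^'l::finite^'v). ereal (H_eps w \<gamma> \<epsilon> f))
           (H_lim w \<gamma>)"
proof -
  define A where "A = (\<lambda>f::real^'l^'v. (\<Sum>l\<in>UNIV. laplacian_form w (comp f l)) - \<gamma> * var_term w f)"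
  define P where "P = (\<lambda>f::real^'l^'v. \<Sum>i\<in>UNIV. W_multi (f $ i))"
  have H: "\<And>e f. H_eps w \<gamma> e f = A f + (1 / e\<^sup>2) * P f"
    unfolding H_eps_def A_def P_def by simp
  have Pnn: "\<And>f. P f \<ge> 0" unfolding P_def by (intro sum_nonneg W_multi_nonneg)
  have AXp: "\<And>f. f \<in> Xp \<Longrightarrow> A f = tv_vec w f - \<gamma> * var_term w f"
  proof -
    fix f :: "real^'l^'v" assume f: "f \<in> Xp"
    have "laplacian_form w (comp f l) = tv w (comp f l)" for l
      using lap_tv[of w "comp f l", OF assms(1)] comp_Xp[OF f] by blast
    thus "A f = tv_vec w f - \<gamma> * var_term w f" unfolding A_def tv_vec_def by simp
  qed
  have HXp: "\<And>e f. f \<in> Xp \<Longrightarrow> H_lim w \<gamma> f = ereal (A f)"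
    using AXp unfolding H_lim_def by simp
  have HnXp: "\<And>f. f \<notin> Xp \<Longrightarrow> H_lim w \<gamma> f = \<infinity>"
    unfolding H_lim_def by simp
  show ?thesis unfolding gamma_converges_def
  proof (intro allI impI conjI)
    fix eps :: "nat \<Rightarrow> real" and f :: "real^'l^'v"
    assume eps: "(\<forall>n. eps n > 0) \<and> eps \<longlonglongrightarrow> 0"
    show "\<exists>fs. fs \<longlonglongrightarrow> f \<and> H_lim w \<gamma> f \<ge> limsup (\<lambda>n. ereal (H_eps w \<gamma> (eps n) (fs n)))"
    proof (intro exI conjI)
      show "(\<lambda>n. f) \<longlonglongrightarrow> f" by simp
      show "H_lim w \<gamma> f \<ge> limsup (\<lambda>n. ereal (H_eps w \<gamma> (eps n) f))"
      proof (cases "f \<in> Xp")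
        case True
        hence "P f = 0" using Xp_iff unfolding P_def by blast
        hence "(\<lambda>n. ereal (H_eps w \<gamma> (eps n) f)) = (\<lambda>n. ereal (A f))" using H by simp
        thus ?thesis using True HXp by (simp add: Limsup_const)
      qed (simp add: HnXp)
    qed
    fix fs assume fs: "fs \<longlonglongrightarrow> f"
    have tA: "(\<lambda>n. A (fs n)) \<longlonglongrightarrow> A f" unfolding A_def by (rule tendsto_A[OF fs])
    have tP: "(\<lambda>n. P (fs n)) \<longlonglongrightarrow> P f" unfolding P_def by (rule tendsto_P[OF fs])
    show "H_lim w \<gamma> f \<le> liminf (\<lambda>n. ereal (H_eps w \<gamma> (eps n) (fs n)))"
    proof (cases "f \<in> Xp")
      case True
      have "liminf (\<lambda>n. ereal (A (fs n))) \<le> liminf (\<lambda>n. ereal (H_eps w \<gamma> (eps n) (fs n)))"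
        by (intro Liminf_mono always_eventually allI)
           (simp add: H Pnn)
      moreover have "liminf (\<lambda>n. ereal (A (fs n))) = ereal (A f)"
        by (intro lim_imp_Liminf) (auto intro: tA)
      ultimately show ?thesis using True HXp by simp
    next
      case False
      hence Pf: "P f > 0" using Xp_iff Pnn[of f] unfolding P_def by force
      have e2: "(\<lambda>n. (eps n)\<^sup>2) \<longlonglongrightarrow> 0"
        using eps tendsto_power[of eps 0 sequentially 2] by simp
      have "filterlim (\<lambda>n. inverse ((eps n)\<^sup>2)) at_top sequentially"
        by (rule filterlim_inverse_at_top[OF e2]) (use eps in \<open>auto intro!: always_eventually simp: less_imp_neq[symmetric]\<close>)
      hence "filterlim (\<lambda>n. P (fs n) * inverse ((eps n)\<^sup>2)) at_top sequentially"
        by (rule filterlim_tendsto_pos_mult_at_top[OF tP Pf])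
      hence "filterlim (\<lambda>n. A (fs n) + P (fs n) * inverse ((eps n)\<^sup>2)) at_top sequentially"
        by (rule filterlim_tendsto_add_at_top[OF tA])
      hence "filterlim (\<lambda>n. H_eps w \<gamma> (eps n) (fs n)) at_top sequentially"
        by (simp add: H field_simps)
      hence "(\<lambda>n. ereal (H_eps w \<gamma> (eps n) (fs n))) \<longlonglongrightarrow> \<infinity>"
        by (simp add: tendsto_PInfty_eq_at_top)
      hence "liminf (\<lambda>n. ereal (H_eps w \<gamma> (eps n) (fs n))) = \<infinity>"
        by (intro lim_imp_Liminf) auto
      thus ?thesis by simp
    qed
  qed
qed

end
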